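(* Let $G$ be a simple 2-connected plane graph and let $(a,b)$ be an admissible state of $G$. Then $$A(a,b)=\sum_{p}\Big( l(p)(a_p+b_p)^2+2(a_p+b_p)\sum_{v\in p}(b_v-b_p)+\sum_{vv'\in p}(b_v-b_p)(b_{v'}-b_p)\Big)+\sum_{vv'\in p_\infty} b_v b_{v'},$$ where $p$ runs over the bounded faces of $G$, $\sum_{vv'\in p}$ runs over the edges on the boundary of $p$, and $\sum_{vv'\in p_\infty}$ runs over the edges on the boundary of the unbounded face. Every summand on the right-hand side is nonnegative; in particular $A(a,b)\ge 0$.
   Context: A simple 2-connected plane graph $G$ is a simple 2-connected planar graph with a fixed embedding in the plane, so every face is bounded by a cycle. Let $p_\infty$ be the unbounded face. For a face $p$, $l(p)$ is the number of edges on its boundary, $v\in p$ means $v$ is a vertex on the boundary of $p$, and $vv'\in p$ means $vv'$ is an edge on the boundary of $p$. A boundary vertex is a vertex on $p_\infty$. An admissible state $(a,b)$ assigns an integer $a_p$ to each bounded face $p$ and an integer $b_v$ to each vertex $v$ such that $a_p+b_v\ge 0$ whenever $p$ is bounded and $v\in p$, and $b_v\ge 0$ for every boundary vertex $v$ (one sets $a_{p_\infty}=0$). For a bounded face $p$, $b_p=\min_{v\in p} b_v$. Define $$A(a,b)=\sum_{p}\Big(l(p)a_p^2+2a_p\sum_{v\in p}b_v\Big)+2\sum_{vv'\in E(G)} b_vb_{v'},\qquad B(a,b)=2\sum_{v}b_v+\sum_p (l(p)-2)a_p,$$ where $p$ runs over the bounded faces, $v$ over all vertices, and the last sum in $A$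 over all edges of $G$. *)

theory Defs
  imports Main "HOL-Combinatorics.Orbits"
begin

definition simple_graph :: "'v set \<Rightarrow> 'v set set \<Rightarrow> bool" where
  "simple_graph V E \<longleftrightarrow> finite V \<and>
     E \<subseteq> {{u, w} | u w. u \<in> V \<and> w \<in> V \<and> u \<noteq> w}"

definition adj_rel :: "'v set \<Rightarrow> 'v set set \<Rightarrow> ('v \<times> 'v) set" where
  "adj_rel V E = {(u, w). u \<in> V \<and> w \<in> V \<and> {u, w} \<in> E}"

definition connected_graph :: "'v set \<Rightarrow> 'v set set \<Rightarrow> bool" where
  "connected_graph V E \<longleftrightarrow> V \<noteq> {} \<and> (\<forall>u\<in>V. \<forall>w\<in>V. (u, w) \<in> (adj_rel V E)\<^sup>*)"

definition two_connected :: "'v set \<Rightarrow> 'v set set \<Rightarrow> bool" where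
  "two_connected V E \<longleftrightarrow> card V \<ge> 3 \<and> connected_graph V E \<and>
     (\<forall>x\<in>V. connected_graph (V - {x}) {e \<in> E. x \<notin> e})"

definition nbrs :: "'v set set \<Rightarrow> 'v \<Rightarrow> 'v set" where
  "nbrs E v = {w. {v, w} \<in> E}"

definition darts :: "'v set set \<Rightarrow> ('v \<times> 'v) set" where
  "darts E = {(u, w). {u, w} \<in> E}"

text \<open>A rotation system assigns to each vertex a cyclic permutation of its neighbours
  (the clockwise order of incident edges in the embedding). Faces are the orbits of the
  face-tracing map on darts.\<close>

definition rotation_system :: "'v set \<Rightarrow> 'v set set \<Rightarrow> ('v \<Rightarrow> 'v \<Rightarrow> 'v) \<Rightarrow> bool" where
  "rotation_system V E rot \<longleftrightarrow>
     (\<forall>v\<in>V. bij_betw (rot v) (nbrs E v) (nbrs E v) \<and> cyclic_on (rot v) (nbrs E v))"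

definition face_succ :: "('v \<Rightarrow> 'v \<Rightarrow> 'v) \<Rightarrow> 'v \<times> 'v \<Rightarrow> 'v \<times> 'v" where
  "face_succ rot d = (snd d, rot (snd d) (fst d))"

definition faces :: "'v set set \<Rightarrow> ('v \<Rightarrow> 'v \<Rightarrow> 'v) \<Rightarrow> ('v \<times> 'v) set set" where
  "faces E rot = {orbit (face_succ rot) d | d. d \<in> darts E}"

text \<open>The embedding is on the sphere (equivalently, in the plane) iff Euler's formula holds.\<close>
definition plane_graph :: "'v set \<Rightarrow> 'v set set \<Rightarrow> ('v \<Rightarrow> 'v \<Rightarrow> 'v) \<Rightarrow> bool" where
  "plane_graph V E rot \<longleftrightarrow> simple_graph V E \<and> connected_graph V E \<and>
     rotation_system V E rot \<and>
     int (card V) - int (card E) + int (card (faces E rot)) = 2"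

definition face_verts :: "('v \<times> 'v) set \<Rightarrow> 'v set" where
  "face_verts p = fst ` p"

definition face_edges :: "('v \<times> 'v) set \<Rightarrow> 'v set set" where
  "face_edges p = (\<lambda>(u, w). {u, w}) ` p"

definition face_len :: "('v \<times> 'v) set \<Rightarrow> nat" where
  "face_len p = card (face_edges p)"

text \<open>The boundary walk of a face visits no vertex twice, i.e. the face is bounded by a cycle.\<close>
definition face_is_cycle :: "('v \<times> 'v) set \<Rightarrow> bool" where
  "face_is_cycle p \<longleftrightarrow> inj_on fst p"

definition admissible ::
  "('v \<times> 'v) set set \<Rightarrow> ('v \<times> 'v) set \<Rightarrow> (('v \<times> 'v) set \<Rightarrow> int) \<Rightarrow> ('v \<Rightarrow> int) \<Rightarrow> bool" where
  "admissible F pinf a b \<longleftrightarrow>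
     (\<forall>p\<in>F - {pinf}. \<forall>v\<in>face_verts p. a p + b v \<ge> 0) \<and>
     (\<forall>v\<in>face_verts pinf. b v \<ge> 0)"

definition face_min :: "('v \<Rightarrow> int) \<Rightarrow> ('v \<times> 'v) set \<Rightarrow> int" where
  "face_min b p = Min (b ` face_verts p)"

definition A_form ::
  "'v set set \<Rightarrow> ('v \<times> 'v) set set \<Rightarrow> ('v \<times> 'v) set \<Rightarrow> (('v \<times> 'v) set \<Rightarrow> int) \<Rightarrow> ('v \<Rightarrow> int) \<Rightarrow> int" where
  "A_form E F pinf a b =
     (\<Sum>p\<in>F - {pinf}. int (face_len p) * (a p)\<^sup>2 + 2 * a p * (\<Sum>v\<in>face_verts p. b v))
     + 2 * (\<Sum>e\<in>E. \<Prod>v\<in>e. b v)"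

end

theory Submission
  imports Defs
begin

lemma self_in_orbit_fin:
  assumes "finite D" "inj_on f D" "f ` D \<subseteq> D" "x \<in> D"
  shows "x \<in> orbit f x"
proof -
  define g where "g = (\<lambda>y. if y \<in> D then f y else y)"
  have "f ` D = D" using assms endo_inj_surj by blast
  then have "bij_betw f D D" using assms(2) by (simp add: bij_betw_def)
  then have "bij_betw g D D" by (rule bij_betw_cong[THEN iffD1, rotated]) (simp add: g_def)
  then have "g permutes D" by (rule bij_imp_permutes) (simp add: g_def)
  then have "permutation g" using assms(1) permutation_permutes by blast
  then have "x \<in> orbit g x" by (rule permutation_self_in_orbit)
  moreover have "orbit f x = orbit g x"
    using assms(3,4) by (intro orbit_cong0[of x D]) (auto simp: g_def)
  ultimately show ?thesis by simp
qed

lemma orbit_eq_of_mem: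
  assumes "x \<in> orbit f x" "s \<in> orbit f x"
  shows "orbit f s = orbit f x"
proof
  show "orbit f s \<subseteq> orbit f x" using assms(2) orbit_trans by fast
  have "x \<in> orbit f s" using orbit_swap[OF assms] .
  then show "orbit f x \<subseteq> orbit f s" using orbit_trans by fast
qed

locale pg =
  fixes V :: "'v set" and E :: "'v set set" and rot :: "'v \<Rightarrow> 'v \<Rightarrow> 'v"
  assumes sg: "simple_graph V E" and rs: "rotation_system V E rot"
    and tc: "two_connected V E" and cyc: "\<forall>p\<in>faces E rot. face_is_cycle p"
begin

abbreviation "D \<equiv> darts E"
abbreviation "f \<equiv> face_succ rot"

lemma E_sub: "E \<subseteq> {{u, w} | u w. u \<in> V \<and> w \<in> V \<and> u \<noteq> w}"
  using sg by (simp add: simple_graph_def)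

lemma finV: "finite V" using sg by (simp add: simple_graph_def)

lemma dart_E: "d \<in> D \<Longrightarrow> {fst d, snd d} \<in> E"
  by (auto simp: darts_def)

lemma dart_props: assumes "d \<in> D" shows "fst d \<in> V" "snd d \<in> V" "fst d \<noteq> snd d"
proof -
  from dart_E[OF assms] E_sub obtain u w where "{fst d, snd d} = {u,w}" "u \<in> V" "w \<in> V" "u \<noteq> w"
    by blast
  then show "fst d \<in> V" "snd d \<in> V" "fst d \<noteq> snd d" by (auto simp: doubleton_eq_iff)
qed

lemma finD: "finite D"
proof -
  have "D \<subseteq> V \<times> V" using dart_props by force
  then show ?thesis using finV finite_subset by blast
qed

lemma finE: "finite E"
proof -
  have "E \<subseteq> Pow V" using E_sub by auto
  then show ?thesis using finV finite_subset by blast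
qed

lemma nbrs_sym: "u \<in> nbrs E w \<longleftrightarrow> w \<in> nbrs E u"
  by (simp add: nbrs_def insert_commute)

lemma f_D: "f ` D \<subseteq> D"
proof
  fix x assume "x \<in> f ` D"
  then obtain u w where d: "(u,w) \<in> D" "x = f (u,w)" by auto
  then have "w \<in> V" using dart_props by force
  have "u \<in> nbrs E w" using d(1) by (simp add: darts_def nbrs_def insert_commute)
  then have "rot w u \<in> nbrs E w" using rs \<open>w \<in> V\<close>
    unfolding rotation_system_def bij_betw_def by blast
  then show "x \<in> D" using d(2) by (simp add: face_succ_def darts_def nbrs_def)
qed

lemma f_inj: "inj_on f D"
proof
  fix x y assume x: "x \<in> D" and y: "y \<in> D" and e: "f x = f y"
  obtain u w where xu: "x = (u,w)" by force
  obtain u' w' where yu: "y = (u',w')" by force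
  have ww: "w = w'" using e xu yu by (simp add: face_succ_def)
  have "w \<in> V" using x xu dart_props by force
  have "u \<in> nbrs E w" "u' \<in> nbrs E w" using x y xu yu ww
    by (auto simp: darts_def nbrs_def insert_commute)
  moreover have "rot w u = rot w u'" using e xu yu ww by (simp add: face_succ_def)
  moreover have "inj_on (rot w) (nbrs E w)" using rs \<open>w \<in> V\<close>
    unfolding rotation_system_def bij_betw_def by blast
  ultimately have "u = u'" by (meson inj_onD)
  then show "x = y" using xu yu ww by simp
qed

lemma self_in: "d \<in> D \<Longrightarrow> d \<in> orbit f d"
  using self_in_orbit_fin[OF finD f_inj f_D] .

lemma orbit_sub: assumes "d \<in> D" shows "orbit f d \<subseteq> D"
proof
  fix x assume "x \<in> orbit f d" then show "x \<in> D"
    by induct (use assms f_D in auto)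
qed

lemma face_props: assumes "p \<in> faces E rot"
  shows "p \<subseteq> D" "finite p" "p \<noteq> {}" "f ` p = p" "inj_on f p" "inj_on fst p"
proof -
  from assms obtain d where d: "d \<in> D" "p = orbit f d" by (auto simp: faces_def)
  show "p \<subseteq> D" using d orbit_sub by simp
  then show fp: "finite p" using finD finite_subset by blast
  show "p \<noteq> {}" using d orbit_nonempty by simp
  show ip: "inj_on f p" using f_inj \<open>p \<subseteq> D\<close> inj_on_subset by blast
  have "f ` p \<subseteq> p" using d by (auto intro: orbit.step)
  then show "f ` p = p" using endo_inj_surj fp ip by blast
  show "inj_on fst p" using cyc assms by (simp add: face_is_cycle_def)
qed

lemma no_leaf:
  assumes w: "w \<in> V" and nb: "nbrs E w = {u}" shows False
proof -
  have uw: "{w,u} \<in> E" using nb by (auto simp: nbrs_def)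
  then have "u \<in> V" "u \<noteq> w" using E_sub by (auto simp: doubleton_eq_iff)
  have c3: "card V \<ge> 3" and con: "connected_graph (V - {u}) {e \<in> E. u \<notin> e}"
    using tc \<open>u \<in> V\<close> unfolding two_connected_def by blast+
  have "card (V - {u}) \<ge> 2" using c3 \<open>u \<in> V\<close> finV by simp
  then have "\<exists>x \<in> V - {u}. x \<noteq> w"
  proof -
    assume "card (V - {u}) \<ge> 2"
    moreover have "V - {u} \<subseteq> {w} \<Longrightarrow> card (V - {u}) \<le> 1"
      using card_mono[of "{w}" "V - {u}"] by simp
    ultimately have "\<not> (V - {u} \<subseteq> {w})" by linarith
    then show ?thesis by auto
  qed
  then obtain x where x: "x \<in> V - {u}" "x \<noteq> w" by blast
  have "w \<in> V - {u}" using w \<open>u \<noteq> w\<close> by simp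
  then have "(w, x) \<in> (adj_rel (V - {u}) {e \<in> E. u \<notin> e})\<^sup>*"
    using con x by (simp add: connected_graph_def)
  then show False
    apply (rule converse_rtranclE) using x nb by (auto simp: adj_rel_def nbrs_def)
qed

lemma no_reverse:
  assumes p: "p \<in> faces E rot" and d: "(u,w) \<in> p" "(w,u) \<in> p" shows False
proof -
  have "f (u,w) \<in> p" using face_props(4)[OF p] d by blast
  then have "(w, rot w u) \<in> p" by (simp add: face_succ_def)
  then have "(w, rot w u) = (w, u)"
    using d(2) by (intro inj_onD[OF face_props(6)[OF p]]) simp_all
  then have r: "rot w u = u" by simp
  have "(u,w) \<in> D" using face_props(1)[OF p] d by blast
  then have "w \<in> V" using dart_props by force
  have "u \<in> nbrs E w" using \<open>(u,w) \<in> D\<close> by (simp add: darts_def nbrs_def insert_commute)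
  have "cyclic_on (rot w) (nbrs E w)" using rs \<open>w \<in> V\<close> by (simp add: rotation_system_def)
  then have "orbit (rot w) u = nbrs E w" using \<open>u \<in> nbrs E w\<close> by (rule orbit_cyclic_eq3)
  moreover have "orbit (rot w) u = {u}" using r by (simp only: orbit_eq_singleton_iff)
  ultimately have "nbrs E w = {u}" by simp
  then show False using no_leaf \<open>w \<in> V\<close> by blast
qed

definition edge :: "'v \<times> 'v \<Rightarrow> 'v set" where "edge d = {fst d, snd d}"

lemma face_edges_eq: "face_edges p = edge ` p"
  unfolding face_edges_def edge_def by (intro image_cong refl) auto

lemma inj_edge: assumes p: "p \<in> faces E rot" shows "inj_on edge p"
proof
  fix x y assume x: "x \<in> p" and y: "y \<in> p" and e: "edge x = edge y"
  obtain u w where xu: "x = (u,w)" by force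
  obtain u' w' where yu: "y = (u',w')" by force
  from e xu yu have "(u = u' \<and> w = w') \<or> (u = w' \<and> w = u')" by (simp add: edge_def doubleton_eq_iff)
  then show "x = y"
  proof
    assume "u = w' \<and> w = u'"
    then show ?thesis using no_reverse[OF p, of u w] x y xu yu by auto
  qed (simp add: xu yu)
qed

lemma finF: "finite (faces E rot)"
proof -
  have "faces E rot = (\<lambda>d. orbit f d) ` D" by (auto simp: faces_def)
  then show ?thesis using finD by simp
qed

lemma UnionF: "\<Union>(faces E rot) = D"
proof
  show "\<Union>(faces E rot) \<subseteq> D" using face_props(1) by blast
  show "D \<subseteq> \<Union>(faces E rot)"
  proof
    fix d assume "d \<in> D"
    then have "orbit f d \<in> faces E rot" unfolding faces_def by blast
    then show "d \<in> \<Union>(faces E rot)" using self_in[OF \<open>d \<in> D\<close>] by blast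
  qed
qed

lemma disjF: assumes "p \<in> faces E rot" "q \<in> faces E rot" "p \<noteq> q" shows "p \<inter> q = {}"
proof (rule ccontr)
  assume "p \<inter> q \<noteq> {}"
  then obtain z where z: "z \<in> p" "z \<in> q" by blast
  from assms obtain d where d: "d \<in> D" "p = orbit f d" by (auto simp: faces_def)
  from assms obtain d' where d': "d' \<in> D" "q = orbit f d'" by (auto simp: faces_def)
  have "orbit f z = p" using orbit_eq_of_mem[OF self_in[OF d(1)]] z d by simp
  moreover have "orbit f z = q" using orbit_eq_of_mem[OF self_in[OF d'(1)]] z d' by simp
  ultimately show False using assms(3) by simp
qed

lemma sum_faces_darts:
  "(\<Sum>p\<in>faces E rot. \<Sum>x\<in>face_edges p. h x) = (\<Sum>d\<in>D. h (edge d))"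
proof -
  have "(\<Sum>p\<in>faces E rot. \<Sum>x\<in>face_edges p. h x) = (\<Sum>p\<in>faces E rot. \<Sum>d\<in>p. h (edge d))"
    using inj_edge by (intro sum.cong refl) (simp add: face_edges_eq sum.reindex)
  also have "\<dots> = (\<Sum>d\<in>\<Union>(faces E rot). h (edge d))"
    using face_props(2) disjF by (subst sum.Union_disjoint) auto
  finally show ?thesis using UnionF by simp
qed

lemma sum_darts_edges:
  "(\<Sum>d\<in>D. h (edge d)) = 2 * (\<Sum>e\<in>E. h e :: 'a :: comm_ring_1)"
proof -
  have "edge ` D \<subseteq> E" using dart_E by (auto simp: edge_def)
  then have "(\<Sum>d\<in>D. h (edge d)) = (\<Sum>e\<in>E. \<Sum>d\<in>{d. d \<in> D \<and> edge d = e}. h (edge d))"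
    using finD finE by (intro sum.group[symmetric])
  also have "\<dots> = (\<Sum>e\<in>E. 2 * h e)"
  proof (intro sum.cong refl)
    fix e assume "e \<in> E"
    then obtain u w where e: "e = {u,w}" "u \<noteq> w" using E_sub by blast
    have "{d. d \<in> D \<and> edge d = e} = {(u,w),(w,u)}"
      using e \<open>e \<in> E\<close> by (auto simp: edge_def darts_def doubleton_eq_iff insert_commute)
    then show "(\<Sum>d\<in>{d. d \<in> D \<and> edge d = e}. h (edge d)) = 2 * h e"
      using e by (simp add: edge_def insert_commute)
  qed
  finally show ?thesis by (simp add: sum_distrib_left)
qed

lemma snd_in_verts: assumes p: "p \<in> faces E rot" and d: "d \<in> p" shows "snd d \<in> face_verts p"
proof -
  have "f d \<in> p" using face_props(4)[OF p] d by blast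
  then show ?thesis by (force simp: face_verts_def face_succ_def)
qed

lemma edge_sub_verts: assumes p: "p \<in> faces E rot" and e: "e \<in> face_edges p"
  shows "e \<subseteq> face_verts p"
proof -
  from e obtain d where d: "d \<in> p" "e = edge d" by (auto simp: face_edges_eq)
  then show ?thesis using snd_in_verts[OF p d(1)] by (force simp: edge_def face_verts_def)
qed

lemma fin_verts: "p \<in> faces E rot \<Longrightarrow> finite (face_verts p)"
  using face_props(2) by (simp add: face_verts_def)

lemma ne_verts: "p \<in> faces E rot \<Longrightarrow> face_verts p \<noteq> {}"
  using face_props(3) by (simp add: face_verts_def)

lemma face_identity:
  fixes b :: "'v \<Rightarrow> int" and a m :: int
  assumes p: "p \<in> faces E rot"
  shows "int (face_len p) * (a + m)\<^sup>2 + 2 * (a + m) * (\<Sum>v\<in>face_verts p. b v - m)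
        + (\<Sum>e\<in>face_edges p. \<Prod>v\<in>e. b v - m)
       = int (face_len p) * a\<^sup>2 + 2 * a * (\<Sum>v\<in>face_verts p. b v) + (\<Sum>e\<in>face_edges p. \<Prod>v\<in>e. b v)"
proof -
  note fp = face_props[OF p]
  have len: "face_len p = card p" using inj_edge[OF p]
    by (simp add: face_len_def face_edges_eq card_image)
  have V: "(\<Sum>v\<in>face_verts p. g v) = (\<Sum>d\<in>p. g (fst d))" for g :: "'v \<Rightarrow> int"
    using fp(6) by (simp add: face_verts_def sum.reindex)
  have Ed: "(\<Sum>e\<in>face_edges p. g e) = (\<Sum>d\<in>p. g (edge d))" for g :: "'v set \<Rightarrow> int"
    using inj_edge[OF p] by (simp add: face_edges_eq sum.reindex)
  have pr: "(\<Prod>v\<in>edge d. h v) = h (fst d) * h (snd d)" if "d \<in> p" for d and h :: "'v \<Rightarrow> int"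
  proof -
    have "fst d \<noteq> snd d" using dart_props(3) fp(1) that by blast
    then show ?thesis by (simp add: edge_def)
  qed
  have sn: "(\<Sum>d\<in>p. b (snd d)) = (\<Sum>d\<in>p. b (fst d))"
  proof -
    have "(\<Sum>d\<in>p. b (snd d)) = (\<Sum>d\<in>p. b (fst (f d)))" by (simp add: face_succ_def)
    also have "\<dots> = (\<Sum>d\<in>f ` p. b (fst d))" using fp(5) by (simp add: sum.reindex)
    finally show ?thesis using fp(4) by simp
  qed
  define S where "S = (\<Sum>d\<in>p. b (fst d))"
  define P where "P = (\<Sum>d\<in>p. b (fst d) * b (snd d))"
  define n where "n = int (card p)"
  have e1: "(\<Sum>e\<in>face_edges p. \<Prod>v\<in>e. b v - m) = (\<Sum>d\<in>p. (b (fst d) - m) * (b (snd d) - m))"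
    using pr by (simp add: Ed)
  have e2: "(\<Sum>d\<in>p. (b (fst d) - m) * (b (snd d) - m))
      = (\<Sum>d\<in>p. b (fst d) * b (snd d) - m * b (fst d) - m * b (snd d) + m * m)"
    by (intro sum.cong refl) (simp add: algebra_simps)
  also have "\<dots> = P - m * S - m * S + n * m * m"
    by (simp add: sum.distrib sum_subtractf sum_distrib_left[symmetric] sn P_def S_def n_def)
  finally have e3: "(\<Sum>e\<in>face_edges p. \<Prod>v\<in>e. b v - m) = P - m * S - m * S + n * m * m"
    using e1 by simp
  have e4: "(\<Sum>e\<in>face_edges p. \<Prod>v\<in>e. b v) = P"
    using pr by (simp add: Ed P_def)
  have e5: "(\<Sum>v\<in>face_verts p. b v - m) = S - n * m"
    unfolding V[of "\<lambda>v. b v - m"] by (simp add: S_def n_def sum_subtractf)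
  have e6: "(\<Sum>v\<in>face_verts p. b v) = S" by (simp add: V S_def)
  show ?thesis unfolding e3 e4 e5 e6 len n_def[symmetric]
    by (simp add: power2_eq_square algebra_simps)
qed

end

theorem theorem1p2:
  fixes V :: "'v set" and E :: "'v set set" and rot :: "'v \<Rightarrow> 'v \<Rightarrow> 'v"
    and pinf :: "('v \<times> 'v) set"
    and a :: "('v \<times> 'v) set \<Rightarrow> int" and b :: "'v \<Rightarrow> int"
  assumes plane: "plane_graph V E rot"
    and two_conn: "two_connected V E"
    and cyc: "\<forall>p\<in>faces E rot. face_is_cycle p"
    and outer: "pinf \<in> faces E rot"
    and adm: "admissible (faces E rot) pinf a b"
  shows "(A_form E (faces E rot) pinf a b =
      (\<Sum>p\<in>faces E rot - {pinf}.
          int (face_len p) * (a p + face_min b p)\<^sup>2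
        + 2 * (a p + face_min b p) * (\<Sum>v\<in>face_verts p. b v - face_min b p)
        + (\<Sum>e\<in>face_edges p. \<Prod>v\<in>e. b v - face_min b p))
      + (\<Sum>e\<in>face_edges pinf. \<Prod>v\<in>e. b v)) \<and>
    (\<forall>p\<in>faces E rot - {pinf}.
          0 \<le> int (face_len p) * (a p + face_min b p)\<^sup>2 \<and>
          0 \<le> 2 * (a p + face_min b p) * (\<Sum>v\<in>face_verts p. b v - face_min b p) \<and>
          (\<forall>e\<in>face_edges p. 0 \<le> (\<Prod>v\<in>e. b v - face_min b p))) \<and>
    (\<forall>e\<in>face_edges pinf. 0 \<le> (\<Prod>v\<in>e. b v)) \<and>
    0 \<le> A_form E (faces E rot) pinf a b"
proof -
  interpret pg V E rot
    using plane two_conn cyc by unfold_locales (auto simp: plane_graph_def)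
  let ?F = "faces E rot"
  have finF': "finite ?F" by (rule finF)
  have minle: "face_min b p \<le> b v" if "p \<in> ?F" "v \<in> face_verts p" for p v
    unfolding face_min_def using that fin_verts by (intro Min_le) auto
  have minin: "\<exists>v\<in>face_verts p. face_min b p = b v" if "p \<in> ?F" for p
  proof -
    have "face_min b p \<in> b ` face_verts p" unfolding face_min_def
      using that fin_verts ne_verts by (intro Min_in) auto
    then show ?thesis by auto
  qed
  have edges2: "2 * (\<Sum>e\<in>E. \<Prod>v\<in>e. b v)
      = (\<Sum>p\<in>?F - {pinf}. \<Sum>e\<in>face_edges p. \<Prod>v\<in>e. b v) + (\<Sum>e\<in>face_edges pinf. \<Prod>v\<in>e. b v)"
  proof -
    have "2 * (\<Sum>e\<in>E. \<Prod>v\<in>e. b v) = (\<Sum>p\<in>?F. \<Sum>e\<in>face_edges p. \<Prod>v\<in>e. b v)"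
      using sum_faces_darts[of "\<lambda>e. \<Prod>v\<in>e. b v"] sum_darts_edges[of "\<lambda>e. \<Prod>v\<in>e. b v"] by simp
    also have "\<dots> = (\<Sum>p\<in>?F - {pinf}. \<Sum>e\<in>face_edges p. \<Prod>v\<in>e. b v) + (\<Sum>e\<in>face_edges pinf. \<Prod>v\<in>e. b v)"
      using sum.remove[OF finF' outer, of "\<lambda>p. \<Sum>e\<in>face_edges p. \<Prod>v\<in>e. b v"] by simp
    finally show ?thesis .
  qed
  have eq: "A_form E ?F pinf a b =
      (\<Sum>p\<in>?F - {pinf}.
          int (face_len p) * (a p + face_min b p)\<^sup>2
        + 2 * (a p + face_min b p) * (\<Sum>v\<in>face_verts p. b v - face_min b p)
        + (\<Sum>e\<in>face_edges p. \<Prod>v\<in>e. b v - face_min b p))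
      + (\<Sum>e\<in>face_edges pinf. \<Prod>v\<in>e. b v)"
  proof -
    have "(\<Sum>p\<in>?F - {pinf}.
          int (face_len p) * (a p + face_min b p)\<^sup>2
        + 2 * (a p + face_min b p) * (\<Sum>v\<in>face_verts p. b v - face_min b p)
        + (\<Sum>e\<in>face_edges p. \<Prod>v\<in>e. b v - face_min b p))
      = (\<Sum>p\<in>?F - {pinf}. (int (face_len p) * (a p)\<^sup>2 + 2 * a p * (\<Sum>v\<in>face_verts p. b v))
          + (\<Sum>e\<in>face_edges p. \<Prod>v\<in>e. b v))"
      by (intro sum.cong refl face_identity) simp
    also have "\<dots> = (\<Sum>p\<in>?F - {pinf}. int (face_len p) * (a p)\<^sup>2 + 2 * a p * (\<Sum>v\<in>face_verts p. b v))
        + (\<Sum>p\<in>?F - {pinf}. \<Sum>e\<in>face_edges p. \<Prod>v\<in>e. b v)"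
      by (simp add: sum.distrib)
    finally show ?thesis unfolding A_form_def using edges2 by simp
  qed
  have nn: "\<forall>p\<in>?F - {pinf}.
          0 \<le> int (face_len p) * (a p + face_min b p)\<^sup>2 \<and>
          0 \<le> 2 * (a p + face_min b p) * (\<Sum>v\<in>face_verts p. b v - face_min b p) \<and>
          (\<forall>e\<in>face_edges p. 0 \<le> (\<Prod>v\<in>e. b v - face_min b p))"
  proof
    fix p assume p: "p \<in> ?F - {pinf}"
    then have pF: "p \<in> ?F" by simp
    obtain v0 where v0: "v0 \<in> face_verts p" "face_min b p = b v0" using minin[OF pF] by blast
    have "0 \<le> a p + face_min b p" using adm p v0 by (auto simp: admissible_def)
    moreover have "0 \<le> (\<Sum>v\<in>face_verts p. b v - face_min b p)"
      using minle[OF pF] by (intro sum_nonneg) simp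
    moreover have "\<forall>e\<in>face_edges p. 0 \<le> (\<Prod>v\<in>e. b v - face_min b p)"
    proof
      fix e assume "e \<in> face_edges p"
      then have "e \<subseteq> face_verts p" using edge_sub_verts[OF pF] by blast
      then show "0 \<le> (\<Prod>v\<in>e. b v - face_min b p)"
        using minle[OF pF] by (intro prod_nonneg) auto
    qed
    ultimately show "0 \<le> int (face_len p) * (a p + face_min b p)\<^sup>2 \<and>
          0 \<le> 2 * (a p + face_min b p) * (\<Sum>v\<in>face_verts p. b v - face_min b p) \<and>
          (\<forall>e\<in>face_edges p. 0 \<le> (\<Prod>v\<in>e. b v - face_min b p))" by simp
  qed
  have nn2: "\<forall>e\<in>face_edges pinf. 0 \<le> (\<Prod>v\<in>e. b v)"
  proof
    fix e assume "e \<in> face_edges pinf"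
    then have "e \<subseteq> face_verts pinf" using edge_sub_verts[OF outer] by blast
    then show "0 \<le> (\<Prod>v\<in>e. b v)" using adm by (intro prod_nonneg) (auto simp: admissible_def)
  qed
  have "0 \<le> A_form E ?F pinf a b"
    unfolding eq using nn nn2
    by (intro add_nonneg_nonneg sum_nonneg) (auto intro!: add_nonneg_nonneg sum_nonneg)
  then show ?thesis using eq nn nn2 by blast
qed

end
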